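(* Let $\beta\in(0,1]$, $m\ge0$ an integer, and $\theta=(k_r)$ a lacunary sequence. If $\liminf_r q_r>1$, then $S^\beta(F,\Delta^m)\subset S_\theta^\beta(F,\Delta^m)$.
   Context: A fuzzy number is a map $X:\mathbb{R}\to[0,1]$ which is normal, fuzzy convex, upper semicontinuous, with compact closure of $\{t:X(t)>0\}$; $L(\mathbb{R})$ is the set of fuzzy numbers. Level sets $[X]^\alpha=\{t:X(t)\ge\alpha\}$ ($\alpha\in(0,1]$), $[X]^0=\overline{\{t:X(t)>0\}}$, are compact intervals $[u^\alpha,v^\alpha]$. Subtraction: $[X-Y]^\alpha=[u_1^\alpha-v_2^\alpha,v_1^\alpha-u_2^\alpha]$. Metric: $d(X,Y)=\sup_{\alpha\in[0,1]}\max\{|u_1^\alpha-u_2^\alpha|,|v_1^\alpha-v_2^\alpha|\}$. $(\Delta^0X)_k=X_k$, $(\Delta^1X)_k=X_k-X_{k+1}$, $(\Delta^mX)_k=(\Delta^1(\Delta^{m-1}X))_k$. A lacunary sequence is an increasing integer sequence $\theta=(k_r)_{r\ge0}$ with $k_0=0$, $h_r=k_r-k_{r-1}\to\infty$; $I_r=(k_{r-1},k_r]$, $q_r=k_r/k_{r-1}$. $S_\theta^\beta(F,\Delta^m)$: sequences $X$ of fuzzy numbers with some $X_0\in L(\mathbb{R})$ such that for all $\varepsilon>0$, $\lim_r\frac{1}{h_r^\beta}|\{k\in I_r:d(\Delta^mX_k,X_0)\ge\varepsilon\}|=0$. $S^\beta(F,\Delta^m)$: sequences $X$ with some $X_0\in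 L(\mathbb{R})$ such that for all $\varepsilon>0$, $\lim_{n\to\infty}\frac{1}{n^\beta}|\{k\le n:d(\Delta^mX_k,X_0)\ge\varepsilon\}|=0$. *)

theory Defs
  imports "HOL-Analysis.Analysis"
begin

type_synonym fuzzy = "real \<Rightarrow> real"

definition fuzzy_number :: "fuzzy \<Rightarrow> bool" where
  "fuzzy_number X \<longleftrightarrow>
     (\<forall>t. 0 \<le> X t \<and> X t \<le> 1) \<and>
     (\<exists>t. X t = 1) \<and>
     (\<forall>s t l. 0 \<le> l \<and> l \<le> 1 \<longrightarrow> min (X s) (X t) \<le> X (l * s + (1 - l) * t)) \<and>
     (\<forall>t a. X t < a \<longrightarrow> (\<forall>\<^sub>F s in at t. X s < a)) \<and>
     compact (closure {t. X t > 0})"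

definition level :: "fuzzy \<Rightarrow> real \<Rightarrow> real set" where
  "level X \<alpha> = (if \<alpha> > 0 then {t. X t \<ge> \<alpha>} else closure {t. X t > 0})"

definition lo :: "fuzzy \<Rightarrow> real \<Rightarrow> real" where
  "lo X \<alpha> = Inf (level X \<alpha>)"

definition hi :: "fuzzy \<Rightarrow> real \<Rightarrow> real" where
  "hi X \<alpha> = Sup (level X \<alpha>)"

text \<open>Subtraction: the fuzzy number whose \<alpha>-level sets are
  [lo X \<alpha> - hi Y \<alpha>, hi X \<alpha> - lo Y \<alpha>]; its membership function is recovered
  from the level sets by the representation X(t) = sup {\<alpha> \<in> [0,1]. t \<in> [X]^\<alpha>}.\<close>
definition fsub :: "fuzzy \<Rightarrow> fuzzy \<Rightarrow> fuzzy" where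
  "fsub X Y = (\<lambda>t. Sup (insert 0 {\<alpha>. \<alpha> \<in> {0..1} \<and>
                  t \<in> {lo X \<alpha> - hi Y \<alpha> .. hi X \<alpha> - lo Y \<alpha>}}))"

definition fdist :: "fuzzy \<Rightarrow> fuzzy \<Rightarrow> real" where
  "fdist X Y = (SUP \<alpha>\<in>{0..1}. max \<bar>lo X \<alpha> - lo Y \<alpha>\<bar> \<bar>hi X \<alpha> - hi Y \<alpha>\<bar>)"

fun fdelta :: "nat \<Rightarrow> (nat \<Rightarrow> fuzzy) \<Rightarrow> nat \<Rightarrow> fuzzy" where
  "fdelta 0 X k = X k"
| "fdelta (Suc m) X k = fsub (fdelta m X k) (fdelta m X (Suc k))"

definition lacunary :: "(nat \<Rightarrow> nat) \<Rightarrow> bool" where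
  "lacunary \<theta> \<longleftrightarrow> \<theta> 0 = 0 \<and> strict_mono \<theta> \<and>
     filterlim (\<lambda>r. real (\<theta> (Suc r) - \<theta> r)) at_top sequentially"

text \<open>Sequences are indexed by k \<ge> 1 (the value at index 0 is irrelevant to the densities).\<close>
definition S_beta :: "real \<Rightarrow> nat \<Rightarrow> (nat \<Rightarrow> fuzzy) set" where
  "S_beta \<beta> m = {X. (\<forall>k. fuzzy_number (X k)) \<and>
     (\<exists>X0. fuzzy_number X0 \<and> (\<forall>\<epsilon>>0.
        (\<lambda>n. real (card {k \<in> {1..n}. fdist (fdelta m X k) X0 \<ge> \<epsilon>}) / real n powr \<beta>)
          \<longlonglongrightarrow> 0))}"

text \<open>h_(r+1) = \<theta>(r+1) - \<theta> r and I_(r+1) = (\<theta> r, \<theta> (r+1)].\<close>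
definition S_theta_beta :: "(nat \<Rightarrow> nat) \<Rightarrow> real \<Rightarrow> nat \<Rightarrow> (nat \<Rightarrow> fuzzy) set" where
  "S_theta_beta \<theta> \<beta> m = {X. (\<forall>k. fuzzy_number (X k)) \<and>
     (\<exists>X0. fuzzy_number X0 \<and> (\<forall>\<epsilon>>0.
        (\<lambda>r. real (card {k \<in> {\<theta> r<..\<theta> (Suc r)}. fdist (fdelta m X k) X0 \<ge> \<epsilon>})
              / real (\<theta> (Suc r) - \<theta> r) powr \<beta>)
          \<longlonglongrightarrow> 0))}"

end

theory Submission
  imports Defs
begin

theorem theorem2p9:
  fixes \<beta> :: real and m :: nat and \<theta> :: "nat \<Rightarrow> nat"
  assumes "0 < \<beta>" and "\<beta> \<le> 1"
    and "lacunary \<theta>"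
    and "liminf (\<lambda>r. ereal (real (\<theta> (Suc r)) / real (\<theta> r))) > 1"
  shows "S_beta \<beta> m \<subseteq> S_theta_beta \<theta> \<beta> m"
proof
  fix X assume "X \<in> S_beta \<beta> m"
  then obtain X0 where fX: "\<forall>k. fuzzy_number (X k)" and f0: "fuzzy_number X0" and
    lim: "\<And>\<epsilon>. \<epsilon> > 0 \<Longrightarrow> (\<lambda>n. real (card {k \<in> {1..n}. fdist (fdelta m X k) X0 \<ge> \<epsilon>}) / real n powr \<beta>)
          \<longlonglongrightarrow> 0" unfolding S_beta_def by blast
  have t0: "\<theta> 0 = 0" and sm: "strict_mono \<theta>" using assms(3) unfolding lacunary_def by auto
  obtain c :: real where c1: "1 < ereal c" and c2: "ereal c < liminf (\<lambda>r. ereal (real (\<theta> (Suc r)) / real (\<theta> r)))"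
    using ereal_dense2[OF assms(4)] by blast
  have c1': "1 < c" using c1 by simp
  have ev: "eventually (\<lambda>r. ereal c < ereal (real (\<theta> (Suc r)) / real (\<theta> r))) sequentially"
    using less_LiminfD[OF c2] .
  define K where "K = c / (c - 1)"
  have K0: "K > 0" using c1' unfolding K_def by simp
  have evb: "eventually (\<lambda>r. real (\<theta> (Suc r)) \<le> K * real (\<theta> (Suc r) - \<theta> r) \<and> \<theta> r < \<theta> (Suc r) \<and> 0 < \<theta> r) sequentially"
    using ev eventually_ge_at_top[of 1]
  proof eventually_elim
    case (elim r)
    have lt: "\<theta> r < \<theta> (Suc r)" using sm by (simp add: strict_mono_Suc_iff)
    have "\<theta> 0 < \<theta> r" using sm elim(2) by (simp add: strict_mono_less)
    hence pos: "0 < \<theta> r" using t0 by simp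
    have q: "c < real (\<theta> (Suc r)) / real (\<theta> r)" using elim(1) by simp
    hence q': "c * real (\<theta> r) < real (\<theta> (Suc r))" using pos by (simp add: field_simps)
    have "real (\<theta> (Suc r) - \<theta> r) = real (\<theta> (Suc r)) - real (\<theta> r)" using lt by simp
    moreover have "real (\<theta> (Suc r)) \<le> K * (real (\<theta> (Suc r)) - real (\<theta> r))"
      unfolding K_def using c1' q' by (simp add: field_simps)
    ultimately show ?case using lt pos by simp
  qed
  show "X \<in> S_theta_beta \<theta> \<beta> m"
    unfolding S_theta_beta_def
  proof (intro CollectI conjI exI[of _ X0] allI impI fX f0)
    show "fuzzy_number (X k)" for k using fX by simp
  next
    fix \<epsilon> :: real assume e: "\<epsilon> > 0"
    define a where "a n = real (card {k \<in> {1..n}. fdist (fdelta m X k) X0 \<ge> \<epsilon>}) / real n powr \<beta>" for n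
    have tl: "filterlim (\<lambda>r. \<theta> (Suc r)) at_top sequentially"
      using filterlim_compose[OF filterlim_subseq[OF sm] filterlim_Suc] by (simp add: o_def)
    have al: "a \<longlonglongrightarrow> 0" unfolding a_def using lim[OF e] .
    have "(\<lambda>r. a (\<theta> (Suc r))) \<longlonglongrightarrow> 0"
      using filterlim_compose[OF al tl] .
    hence up: "(\<lambda>r. a (\<theta> (Suc r)) * K powr \<beta>) \<longlonglongrightarrow> 0"
      by (rule tendsto_mult_left_zero)
    show "(\<lambda>r. real (card {k \<in> {\<theta> r<..\<theta> (Suc r)}. fdist (fdelta m X k) X0 \<ge> \<epsilon>})
              / real (\<theta> (Suc r) - \<theta> r) powr \<beta>) \<longlonglongrightarrow> 0"
    proof (rule tendsto_sandwich[OF _ _ tendsto_const up])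
      show "eventually (\<lambda>r. 0 \<le> real (card {k \<in> {\<theta> r<..\<theta> (Suc r)}. fdist (fdelta m X k) X0 \<ge> \<epsilon>})
              / real (\<theta> (Suc r) - \<theta> r) powr \<beta>) sequentially" by simp
      show "eventually (\<lambda>r. real (card {k \<in> {\<theta> r<..\<theta> (Suc r)}. fdist (fdelta m X k) X0 \<ge> \<epsilon>})
              / real (\<theta> (Suc r) - \<theta> r) powr \<beta> \<le> a (\<theta> (Suc r)) * K powr \<beta>) sequentially"
        using evb
      proof eventually_elim
        case (elim r)
        define N where "N = real (card {k \<in> {1..\<theta> (Suc r)}. fdist (fdelta m X k) X0 \<ge> \<epsilon>})"
        define C where "C = real (card {k \<in> {\<theta> r<..\<theta> (Suc r)}. fdist (fdelta m X k) X0 \<ge> \<epsilon>})"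
        define T where "T = real (\<theta> (Suc r))"
        define h where "h = real (\<theta> (Suc r) - \<theta> r)"
        have CN: "C \<le> N" unfolding C_def N_def
          by (intro of_nat_mono card_mono) auto
        have hpos: "h > 0" using elim unfolding h_def by simp
        have Tpos: "T > 0" using elim unfolding T_def by simp
        have TK: "T \<le> K * h" using elim unfolding T_def h_def by (simp del: of_nat_diff)
        have "T powr \<beta> \<le> (K * h) powr \<beta>" using TK Tpos assms(1) by (intro powr_mono2) auto
        also have "\<dots> = K powr \<beta> * h powr \<beta>" using K0 hpos by (simp add: powr_mult)
        finally have TKh: "T powr \<beta> \<le> K powr \<beta> * h powr \<beta>" .
        have N0: "N \<ge> 0" unfolding N_def by simp
        have hb: "h powr \<beta> > 0" using hpos by simp
        have Tb: "T powr \<beta> > 0" using Tpos by simp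
        have "C / h powr \<beta> \<le> N / h powr \<beta>" using CN hb by (simp add: divide_right_mono)
        also have "\<dots> \<le> N / T powr \<beta> * K powr \<beta>"
          using TKh N0 hb Tb by (simp add: field_simps mult_left_mono)
        finally show ?case unfolding a_def C_def N_def T_def h_def .
      qed
    qed
  qed
qed

end
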